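(* Let $\Omega\subset\mathbb{R}^n$ be a nonempty closed convex set and $f:\mathbb{R}^n\to\mathbb{R}$ differentiable over $\Omega$ such that (i) $f(\bm{x})\ge\underline{f}$ for all $\bm{x}\in\Omega$, (ii) $\|\nabla f(\bm{x})-\nabla f(\bm{y})\|_2\le L\|\bm{x}-\bm{y}\|_2$ for all $\bm{x},\bm{y}\in\Omega$ for some $L>0$, and (iii) the relaxation sequence $\{\omega_k\}\subset[0,\infty)$ satisfies $\sum_{k=0}^\infty\omega_k<\infty$. Suppose $\{\bm{x}_k\}$ is generated by either IGPM without line search or IGPM with line search (described in the context). Then \[\lim_{k\to\infty}E(\bm{x}_k;\beta)=0,\qquad\text{where } E(\bm{x};\beta):=\|\bm{x}-\mathcal{P}_\Omega(\bm{x}-\beta\nabla f(\bm{x}))\|_2^2 .\]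
   Context: $\mathcal{P}_\Omega$ is Euclidean projection onto $\Omega$. For $\bm{x}_k\in\Omega$ write $\bm{g}_k=\nabla f(\bm{x}_k)$, $\bm{v}_k=\bm{x}_k-\beta\bm{g}_k$ for a fixed $\beta>0$, and define $p(\bm{z};\bm{x}_k)=\tfrac12\|\bm{z}-\bm{v}_k\|_2^2+\delta_\Omega(\bm{z})$ ($\delta_\Omega$ the $0/+\infty$ indicator of $\Omega$), $\Delta p(\bm{z};\bm{x}_k)=p(\bm{x}_k;\bm{x}_k)-p(\bm{z};\bm{x}_k)$, and $q(\bm{u};\bm{x}_k)=-\tfrac12\|\bm{u}-\bm{v}_k\|_2^2-\delta_\Omega^*(\bm{u})+\tfrac12\|\bm{v}_k\|_2^2$ with $\delta^*_\Omega(\bm{u})=\sup_{\bm{x}\in\Omega}\langle\bm{x},\bm{u}\rangle$. An inexact projection at iteration $k$ is a point $\bm{z}_k\in\Omega$ with $\Delta p(\bm{z}_k;\bm{x}_k)\ge0$ together with some dual point $\bm{u}_k$ such that $\frac{p(\bm{x}_k;\bm{x}_k)-p(\bm{z}_k;\bm{x}_k)+\omega_k}{p(\bm{x}_k;\bm{x}_k)-q(\bm{u}_k;\bm{x}_k)+\omega_k}\ge\gamma$, where $0<\gamma<1$. IGPM without line search: $0<\beta\le1/L$, $\bm{x}_0\in\Omega$, and $\bm{x}_{k+1}=\bm{z}_k$ for all $k$. IGPM with line search: fix $0<\eta<1$, $0<\alpha\le1$, $\beta>0$, $0<\theta<1$, $\bm{x}_0\in\Omega$; set $\bm{d}_k=\bm{z}_k-\bm{x}_k$,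 let $\alpha_k$ be the largest value in $\{\theta^i\alpha: i=0,1,2,\dots\}$ with $f(\bm{x}_k+\alpha_k\bm{d}_k)\le f(\bm{x}_k)+\eta\alpha_k\bm{g}_k^T\bm{d}_k$, and set $\bm{x}_{k+1}=\bm{x}_k+\alpha_k\bm{d}_k$. The algorithms are considered as generating infinite sequences. *)

theory Defs
  imports "HOL-Analysis.Analysis"
begin

definition proj :: "'a::euclidean_space set \<Rightarrow> 'a \<Rightarrow> 'a" where
  "proj \<Omega> y = closest_point \<Omega> y"

definition support_fn :: "'a::euclidean_space set \<Rightarrow> 'a \<Rightarrow> ereal" where
  "support_fn \<Omega> u = (SUP x\<in>\<Omega>. ereal (inner x u))"

definition pobj :: "'a::euclidean_space set \<Rightarrow> 'a \<Rightarrow> 'a \<Rightarrow> ereal" where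
  "pobj \<Omega> v z = (if z \<in> \<Omega> then ereal (1/2 * (norm (z - v))\<^sup>2) else \<infinity>)"

definition qobj :: "'a::euclidean_space set \<Rightarrow> 'a \<Rightarrow> 'a \<Rightarrow> ereal" where
  "qobj \<Omega> v u = ereal (- 1/2 * (norm (u - v))\<^sup>2 + 1/2 * (norm v)\<^sup>2) - support_fn \<Omega> u"

text \<open>Inexact projection criterion at x with v = x - beta g, tolerance omega, parameter gamma:
  z in Omega, Delta p(z) >= 0, and the ratio condition, written cross-multiplied.\<close>
definition inexact_proj ::
  "'a::euclidean_space set \<Rightarrow> real \<Rightarrow> real \<Rightarrow> 'a \<Rightarrow> 'a \<Rightarrow> real \<Rightarrow> 'a \<Rightarrow> 'a \<Rightarrow> bool" where
  "inexact_proj \<Omega> \<beta> \<gamma> x g \<omega> z u \<longleftrightarrow>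
     (let v = x - \<beta> *\<^sub>R g in
       z \<in> \<Omega> \<and> pobj \<Omega> v x - pobj \<Omega> v z \<ge> 0 \<and>
       pobj \<Omega> v x - pobj \<Omega> v z + ereal \<omega>
         \<ge> ereal \<gamma> * (pobj \<Omega> v x - qobj \<Omega> v u + ereal \<omega>))"

definition Emeas :: "'a::euclidean_space set \<Rightarrow> ('a \<Rightarrow> 'a) \<Rightarrow> real \<Rightarrow> 'a \<Rightarrow> real" where
  "Emeas \<Omega> grad \<beta> x = (norm (x - proj \<Omega> (x - \<beta> *\<^sub>R grad x)))\<^sup>2"

end

theory Submission
  imports Defs
begin


lemma descent:
  fixes \<Omega> :: "'a::euclidean_space set" and f :: "'a \<Rightarrow> real"
  assumes cvx: "convex \<Omega>"
    and deriv: "\<And>y. y \<in> \<Omega> \<Longrightarrow> GDERIV f y :> grad y"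
    and lip: "\<And>y w. y \<in> \<Omega> \<Longrightarrow> w \<in> \<Omega> \<Longrightarrow> norm (grad y - grad w) \<le> L * norm (y - w)"
    and y: "y \<in> \<Omega>" and w: "w \<in> \<Omega>"
  shows "f w \<le> f y + inner (grad y) (w - y) + L / 2 * (norm (w - y))\<^sup>2"
proof -
  define d where "d = w - y"
  define \<psi> where "\<psi> t = f (y + t *\<^sub>R d) - t * inner (grad y) d - L / 2 * t\<^sup>2 * (norm d)\<^sup>2" for t
  define \<psi>' where "\<psi>' t = inner d (grad (y + t *\<^sub>R d)) - inner (grad y) d - L * t * (norm d)\<^sup>2" for t
  have inO: "y + t *\<^sub>R d \<in> \<Omega>" if "0 \<le> t" "t \<le> 1" for t
  proof -
    have "y + t *\<^sub>R d = (1 - t) *\<^sub>R y + t *\<^sub>R w" by (simp add: d_def algebra_simps)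
    then show ?thesis using convexD[OF cvx y w, of "1 - t" t] that by simp
  qed
  have D: "(\<psi> has_real_derivative \<psi>' t) (at t)" if "0 \<le> t" "t \<le> 1" for t
  proof -
    have l: "((\<lambda>t. y + t *\<^sub>R d) has_derivative (\<lambda>h. h *\<^sub>R d)) (at t)"
      by (auto intro!: derivative_eq_intros)
    have g: "(f has_derivative (\<lambda>h. inner h (grad (y + t *\<^sub>R d)))) (at (y + t *\<^sub>R d))"
      using deriv[OF inO[OF that]] by (simp add: gderiv_def)
    have c: "((\<lambda>t. f (y + t *\<^sub>R d)) has_derivative (\<lambda>h. h * inner d (grad (y + t *\<^sub>R d)))) (at t)"
      using has_derivative_compose[OF l g] by simp
    have c': "((\<lambda>t. f (y + t *\<^sub>R d)) has_real_derivative inner d (grad (y + t *\<^sub>R d))) (at t)"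
      proof -
      have eq: "(\<lambda>h. h * inner d (grad (y + t *\<^sub>R d))) = (*) (inner d (grad (y + t *\<^sub>R d)))"
        by (rule ext) (simp add: mult.commute)
      show ?thesis using c unfolding has_field_derivative_def eq .
    qed
    show ?thesis unfolding \<psi>_def \<psi>'_def
      by (rule derivative_eq_intros c' refl | simp)+
  qed
  have "\<psi> 1 \<le> \<psi> 0"
  proof -
    obtain \<xi> where \<xi>: "0 < \<xi>" "\<xi> < 1" "\<psi> 1 - \<psi> 0 = (1 - 0) * \<psi>' \<xi>"
      using MVT2[of 0 1 \<psi> \<psi>'] D by auto
    have "inner d (grad (y + \<xi> *\<^sub>R d)) - inner (grad y) d = inner (grad (y + \<xi> *\<^sub>R d) - grad y) d"
      by (simp add: inner_diff_left inner_diff_right inner_commute)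
    also have "\<dots> \<le> norm (grad (y + \<xi> *\<^sub>R d) - grad y) * norm d" by (rule norm_cauchy_schwarz)
    also have "\<dots> \<le> (L * norm ((y + \<xi> *\<^sub>R d) - y)) * norm d"
      by (rule mult_right_mono[OF lip[OF inO y]]) (use \<xi> in auto)
    also have "\<dots> = L * \<xi> * (norm d)\<^sup>2" using \<xi> by (simp add: power2_eq_square)
    finally have "\<psi>' \<xi> \<le> 0" unfolding \<psi>'_def by simp
    then show ?thesis using \<xi> by simp
  qed
  then show ?thesis by (simp add: \<psi>_def d_def)
qed


lemma key:
  fixes \<Omega> :: "'a::euclidean_space set"
  assumes cl: "closed \<Omega>" and cvx: "convex \<Omega>" and ne: "\<Omega> \<noteq> {}" and x: "x \<in> \<Omega>"
    and gam: "0 < \<gamma>" and om: "\<omega> \<ge> 0"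
    and ip: "inexact_proj \<Omega> \<beta> \<gamma> x g \<omega> z u"
  defines "v \<equiv> x - \<beta> *\<^sub>R g"
  shows "z \<in> \<Omega>" and "1/2 * (norm (x - v))\<^sup>2 - 1/2 * (norm (z - v))\<^sup>2 \<ge> 0"
    and "\<gamma> / 2 * (norm (x - proj \<Omega> v))\<^sup>2 \<le> (1/2 * (norm (x - v))\<^sup>2 - 1/2 * (norm (z - v))\<^sup>2) + \<omega>"
proof -
  define D where "D = 1/2 * (norm (x - v))\<^sup>2 - 1/2 * (norm (z - v))\<^sup>2"
  define zs where "zs = proj \<Omega> v"
  have zO: "z \<in> \<Omega>" and c1: "pobj \<Omega> v x - pobj \<Omega> v z \<ge> 0"
    and c2: "pobj \<Omega> v x - pobj \<Omega> v z + ereal \<omega> \<ge> ereal \<gamma> * (pobj \<Omega> v x - qobj \<Omega> v u + ereal \<omega>)"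
    using ip unfolding inexact_proj_def v_def Let_def by auto
  show "z \<in> \<Omega>" by (fact zO)
  have px: "pobj \<Omega> v x = ereal (1/2 * (norm (x - v))\<^sup>2)" using x by (simp add: pobj_def)
  have pz: "pobj \<Omega> v z = ereal (1/2 * (norm (z - v))\<^sup>2)" using zO by (simp add: pobj_def)
  from c1 show "1/2 * (norm (x - v))\<^sup>2 - 1/2 * (norm (z - v))\<^sup>2 \<ge> 0" unfolding px pz by simp
  have zsO: "zs \<in> \<Omega>" unfolding zs_def proj_def using closest_point_in_set[OF cl ne] .
  have zsmin: "\<forall>y\<in>\<Omega>. dist v zs \<le> dist v y"
    unfolding zs_def proj_def using closest_point_exists(2)[OF cl ne] by blast
  have dot: "inner (v - zs) (x - zs) \<le> 0"
    by (rule any_closest_point_dot[OF cvx cl zsO x zsmin])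
  have "(norm (x - v))\<^sup>2 = (norm (x - zs))\<^sup>2 - 2 * inner (v - zs) (x - zs) + (norm (zs - v))\<^sup>2"
    by (simp add: power2_norm_eq_inner inner_diff_left inner_diff_right inner_commute algebra_simps)
  with dot have sc: "1/2 * (norm (x - v))\<^sup>2 - 1/2 * (norm (zs - v))\<^sup>2 \<ge> 1/2 * (norm (x - zs))\<^sup>2"
    by linarith
  \<comment> \<open>weak duality\<close>
  have sig: "support_fn \<Omega> u \<ge> ereal (inner zs u)"
    unfolding support_fn_def using zsO by (rule SUP_upper)
  have "qobj \<Omega> v u \<le> ereal (- 1/2 * (norm (u - v))\<^sup>2 + 1/2 * (norm v)\<^sup>2) - ereal (inner zs u)"
    unfolding qobj_def by (rule ereal_minus_mono[OF order_refl sig])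
  also have "\<dots> = ereal (- 1/2 * (norm (u - v))\<^sup>2 + 1/2 * (norm v)\<^sup>2 - inner zs u)" by simp
  also have "\<dots> \<le> ereal (1/2 * (norm (zs - v))\<^sup>2)"
  proof -
    have "1/2 * (norm (zs - v))\<^sup>2 - (- 1/2 * (norm (u - v))\<^sup>2 + 1/2 * (norm v)\<^sup>2 - inner zs u)
        = 1/2 * (norm (zs + u - v))\<^sup>2"
      by (simp add: power2_norm_eq_inner inner_diff_left inner_diff_right inner_add_left inner_add_right
          inner_commute algebra_simps)
    moreover have "1/2 * (norm (zs + u - v))\<^sup>2 \<ge> 0" by simp
    ultimately have "- 1/2 * (norm (u - v))\<^sup>2 + 1/2 * (norm v)\<^sup>2 - inner zs u \<le> 1/2 * (norm (zs - v))\<^sup>2"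
      by linarith
    then show ?thesis by simp
  qed
  finally have q: "qobj \<Omega> v u \<le> ereal (1/2 * (norm (zs - v))\<^sup>2)" .
  have "ereal (1/2 * (norm (x - v))\<^sup>2) - ereal (1/2 * (norm (zs - v))\<^sup>2) \<le> pobj \<Omega> v x - qobj \<Omega> v u"
    unfolding px by (rule ereal_minus_mono[OF order_refl q])
  note h = add_right_mono[OF this, of "ereal \<omega>"]
  have "ereal (1/2 * (norm (x - v))\<^sup>2 - 1/2 * (norm (zs - v))\<^sup>2 + \<omega>) \<le> pobj \<Omega> v x - qobj \<Omega> v u + ereal \<omega>"
    using h by simp
  then have "ereal \<gamma> * ereal (1/2 * (norm (x - v))\<^sup>2 - 1/2 * (norm (zs - v))\<^sup>2 + \<omega>)
      \<le> ereal \<gamma> * (pobj \<Omega> v x - qobj \<Omega> v u + ereal \<omega>)"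
    by (rule ereal_mult_left_mono) (use gam in simp)
  also have "\<dots> \<le> ereal (D + \<omega>)" using c2 unfolding px pz D_def by simp
  finally have "\<gamma> * (1/2 * (norm (x - v))\<^sup>2 - 1/2 * (norm (zs - v))\<^sup>2 + \<omega>) \<le> D + \<omega>" by simp
  moreover have "\<gamma> * (1/2 * (norm (x - zs))\<^sup>2) \<le> \<gamma> * (1/2 * (norm (x - v))\<^sup>2 - 1/2 * (norm (zs - v))\<^sup>2 + \<omega>)"
    using sc om gam by (intro mult_left_mono) auto
  ultimately show "\<gamma> / 2 * (norm (x - proj \<Omega> v))\<^sup>2 \<le> (1/2 * (norm (x - v))\<^sup>2 - 1/2 * (norm (z - v))\<^sup>2) + \<omega>"
    unfolding D_def zs_def by simp
qed


lemma Did: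
  fixes x z g :: "'a::euclidean_space"
  shows "1/2 * (norm (x - (x - \<beta> *\<^sub>R g)))\<^sup>2 - 1/2 * (norm (z - (x - \<beta> *\<^sub>R g)))\<^sup>2
    = - \<beta> * inner g (z - x) - 1/2 * (norm (z - x))\<^sup>2"
proof -
  define d where "d = z - x"
  have e2: "z - (x - \<beta> *\<^sub>R g) = d + \<beta> *\<^sub>R g" by (simp add: d_def algebra_simps)
  have e1: "x - (x - \<beta> *\<^sub>R g) = \<beta> *\<^sub>R g" by simp
  have n2: "(norm (d + \<beta> *\<^sub>R g))\<^sup>2 = inner d d + 2 * \<beta> * inner g d + \<beta>\<^sup>2 * inner g g"
    unfolding power2_norm_eq_inner
    apply (simp add: inner_add_left inner_add_right power2_eq_square algebra_simps)
    using inner_commute[of d g] by blast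
  have n1: "(norm (\<beta> *\<^sub>R g))\<^sup>2 = \<beta>\<^sup>2 * inner g g"
    unfolding power2_norm_eq_inner by (simp add: power2_eq_square)
  show ?thesis unfolding e1 e2 n1 n2 d_def[symmetric] power2_norm_eq_inner
    apply (simp add: algebra_simps)
    using inner_commute[of d g] by blast
qed

lemma case1_step:
  fixes G N D L \<beta> fx fz :: real
  assumes "fz \<le> fx + G + L / 2 * N" "D = - \<beta> * G - 1/2 * N" "\<beta> > 0" "L > 0" "\<beta> \<le> 1 / L" "N \<ge> 0"
  shows "fz \<le> fx - (1/\<beta>) * D"
proof -
  have G: "G = - (D + N/2) / \<beta>" using assms(2,3) by (simp add: field_simps)
  have "L \<le> 1/\<beta>" using assms(3,4,5) by (simp add: field_simps)
  then have "L / 2 * N \<le> (1/\<beta>) / 2 * N" using assms(6) by (intro mult_right_mono) auto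
  then show ?thesis using assms(1) assms(3) unfolding G by (simp add: field_simps)
qed

lemma case2_a:
  fixes G N D L \<beta> \<eta> t fx fw :: real
  assumes fw: "fw \<le> fx + t * G + L / 2 * (t\<^sup>2 * N)" and na: "\<not> fw \<le> fx + \<eta> * t * G"
    and Dd: "D = - \<beta> * G - 1/2 * N" and D0: "D \<ge> 0" and "\<beta> > 0" "L > 0" "N \<ge> 0" "t > 0" "\<eta> < 1"
  shows "t > (1 - \<eta>) / (\<beta> * L)"
proof -
  have "\<eta> * t * G < t * G + L / 2 * (t\<^sup>2 * N)" using fw na by linarith
  then have "t * ((1 - \<eta>) * (- G)) < t * (L / 2 * t * N)" by (simp add: algebra_simps power2_eq_square)
  then have 1: "(1 - \<eta>) * (- G) < L / 2 * t * N" using \<open>t > 0\<close> mult_less_cancel_left_pos by blast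
  have "\<beta> * (- G) \<ge> N / 2" using Dd D0 by linarith
  then have "(1 - \<eta>) * (\<beta> * (- G)) \<ge> (1 - \<eta>) * (N / 2)" using \<open>\<eta> < 1\<close> by (intro mult_left_mono) auto
  moreover have "\<beta> * ((1 - \<eta>) * (- G)) < \<beta> * (L / 2 * t * N)" using mult_strict_left_mono[OF 1 \<open>\<beta> > 0\<close>] .
  moreover have "\<beta> * ((1 - \<eta>) * (- G)) = (1 - \<eta>) * (\<beta> * (- G))" by simp
  moreover have "\<beta> * (L / 2 * t * N) = \<beta> * L * t * N / 2" by simp
  moreover have "(1 - \<eta>) * (N / 2) = (1 - \<eta>) * N / 2" by simp
  ultimately have 2: "(1 - \<eta>) * N < \<beta> * L * t * N" by linarith
  have "N > 0"
  proof (rule ccontr)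
    assume "\<not> N > 0" then have "N = 0" using \<open>N \<ge> 0\<close> by simp
    then show False using 2 by simp
  qed
  then have "(1 - \<eta>) < \<beta> * L * t" using 2 by simp
  then show ?thesis using \<open>\<beta> > 0\<close> \<open>L > 0\<close> by (simp add: field_simps)
qed

theorem theorem3p6:
  fixes \<Omega> :: "'a::euclidean_space set"
    and f :: "'a \<Rightarrow> real" and grad :: "'a \<Rightarrow> 'a"
    and L flow \<beta> \<gamma> :: real
    and \<omega> :: "nat \<Rightarrow> real"
    and x z u :: "nat \<Rightarrow> 'a"
  assumes "\<Omega> \<noteq> {}" and "closed \<Omega>" and "convex \<Omega>"
    and deriv: "\<And>y. y \<in> \<Omega> \<Longrightarrow> GDERIV f y :> grad y"
    and lower: "\<And>y. y \<in> \<Omega> \<Longrightarrow> f y \<ge> flow"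
    and "L > 0"
    and lip: "\<And>y w. y \<in> \<Omega> \<Longrightarrow> w \<in> \<Omega> \<Longrightarrow> norm (grad y - grad w) \<le> L * norm (y - w)"
    and omega_nonneg: "\<And>k. \<omega> k \<ge> 0" and "summable \<omega>"
    and "0 < \<gamma>" and "\<gamma> < 1" and "\<beta> > 0"
    and "x 0 \<in> \<Omega>"
    and inexact: "\<And>k. inexact_proj \<Omega> \<beta> \<gamma> (x k) (grad (x k)) (\<omega> k) (z k) (u k)"
    and alg: "(\<beta> \<le> 1 / L \<and> (\<forall>k. x (Suc k) = z k))
      \<or> (\<exists>\<eta> \<alpha> \<theta> (a :: nat \<Rightarrow> real). 0 < \<eta> \<and> \<eta> < 1 \<and> 0 < \<alpha> \<and> \<alpha> \<le> 1 \<and> 0 < \<theta> \<and> \<theta> < 1 \<and>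
           (\<forall>k. let d = z k - x k;
                     armijo = (\<lambda>t. f (x k + t *\<^sub>R d) \<le> f (x k) + \<eta> * t * inner (grad (x k)) d)
                 in (\<exists>i. a k = \<theta> ^ i * \<alpha> \<and> armijo (a k) \<and> (\<forall>j<i. \<not> armijo (\<theta> ^ j * \<alpha>)))
                    \<and> x (Suc k) = x k + a k *\<^sub>R d))"
  shows "(\<lambda>k. Emeas \<Omega> grad \<beta> (x k)) \<longlonglongrightarrow> 0"
proof -
  note cl = \<open>closed \<Omega>\<close> and cvx = \<open>convex \<Omega>\<close> and ne = \<open>\<Omega> \<noteq> {}\<close>
  define v where "v k = x k - \<beta> *\<^sub>R grad (x k)" for k
  define D where "D k = 1/2 * (norm (x k - v k))\<^sup>2 - 1/2 * (norm (z k - v k))\<^sup>2" for k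
  have zO: "z k \<in> \<Omega>" for k using inexact[of k] unfolding inexact_proj_def Let_def by auto
  have DG: "D k = - \<beta> * inner (grad (x k)) (z k - x k) - 1/2 * (norm (z k - x k))\<^sup>2" for k
    unfolding D_def v_def by (rule Did)
  have Dnn: "D k \<ge> 0" if "x k \<in> \<Omega>" for k
    using key(2)[OF cl cvx ne that \<open>0 < \<gamma>\<close> omega_nonneg inexact[of k]] unfolding D_def v_def .
  have step: "\<exists>c>0. (\<forall>k. x k \<in> \<Omega>) \<and> (\<forall>k. f (x (Suc k)) \<le> f (x k) - c * D k)"
    using alg
  proof (elim disjE exE conjE)
    assume b: "\<beta> \<le> 1 / L" and xs: "\<forall>k. x (Suc k) = z k"
    have xO: "x k \<in> \<Omega>" for k
      by (cases k) (use \<open>x 0 \<in> \<Omega>\<close> xs zO in auto)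
    have "f (x (Suc k)) \<le> f (x k) - (1/\<beta>) * D k" for k
    proof -
      have "f (z k) \<le> f (x k) + inner (grad (x k)) (z k - x k) + L / 2 * (norm (z k - x k))\<^sup>2"
        by (rule descent[OF cvx deriv lip xO zO])
      then have "f (z k) \<le> f (x k) - (1/\<beta>) * D k"
        by (rule case1_step[OF _ DG \<open>\<beta> > 0\<close> \<open>L > 0\<close> b]) simp
      then show ?thesis using xs by simp
    qed
    then show ?thesis using xO \<open>\<beta> > 0\<close> by (intro exI[of _ "1/\<beta>"]) auto
  next
    fix \<eta> \<alpha> \<theta> :: real and a :: "nat \<Rightarrow> real"
    assume "0 < \<eta>" "\<eta> < 1" "0 < \<alpha>" "\<alpha> \<le> 1" "0 < \<theta>" "\<theta> < 1"
    assume H: "\<forall>k. let d = z k - x k;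
                     armijo = (\<lambda>t. f (x k + t *\<^sub>R d) \<le> f (x k) + \<eta> * t * inner (grad (x k)) d)
                 in (\<exists>i. a k = \<theta> ^ i * \<alpha> \<and> armijo (a k) \<and> (\<forall>j<i. \<not> armijo (\<theta> ^ j * \<alpha>)))
                    \<and> x (Suc k) = x k + a k *\<^sub>R d"
    have Hk: "(\<exists>i. a k = \<theta> ^ i * \<alpha> \<and>
        f (x k + a k *\<^sub>R (z k - x k)) \<le> f (x k) + \<eta> * a k * inner (grad (x k)) (z k - x k) \<and>
        (\<forall>j<i. \<not> f (x k + (\<theta> ^ j * \<alpha>) *\<^sub>R (z k - x k)) \<le> f (x k) + \<eta> * (\<theta> ^ j * \<alpha>) * inner (grad (x k)) (z k - x k)))
        \<and> x (Suc k) = x k + a k *\<^sub>R (z k - x k)" for k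
      using spec[OF H, of k] unfolding Let_def .
    have pow: "0 < \<theta> ^ i * \<alpha> \<and> \<theta> ^ i * \<alpha> \<le> 1" for i
    proof -
      have "\<theta> ^ i \<le> 1" using \<open>0 < \<theta>\<close> \<open>\<theta> < 1\<close> by (simp add: power_le_one)
      then have "\<theta> ^ i * \<alpha> \<le> 1 * 1" using \<open>0 < \<alpha>\<close> \<open>\<alpha> \<le> 1\<close> by (intro mult_mono) auto
      then show ?thesis using \<open>0 < \<theta>\<close> \<open>0 < \<alpha>\<close> by simp
    qed
    have ak: "0 < a k \<and> a k \<le> 1" for k using Hk[of k] pow by auto
    have segO: "y + t *\<^sub>R (w - y) \<in> \<Omega>" if "y \<in> \<Omega>" "w \<in> \<Omega>" "0 \<le> t" "t \<le> 1" for y w t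
    proof -
      have "y + t *\<^sub>R (w - y) = (1 - t) *\<^sub>R y + t *\<^sub>R w" by (simp add: algebra_simps)
      then show ?thesis using convexD[OF cvx that(1,2), of "1 - t" t] that by simp
    qed
    have xO: "x k \<in> \<Omega>" for k
    proof (induction k)
      case 0 show ?case by (fact \<open>x 0 \<in> \<Omega>\<close>)
    next
      case (Suc k) then show ?case using Hk[of k] segO[OF Suc zO, of "a k"] ak[of k] by auto
    qed
    define cmin where "cmin = min \<alpha> (\<theta> * (1 - \<eta>) / (\<beta> * L))"
    have cpos: "cmin > 0" unfolding cmin_def using \<open>0 < \<alpha>\<close> \<open>0 < \<theta>\<close> \<open>\<eta> < 1\<close> \<open>\<beta> > 0\<close> \<open>L > 0\<close> by simp
    have alow: "a k \<ge> cmin" for k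
    proof -
      obtain i where i: "a k = \<theta> ^ i * \<alpha>"
        and na: "\<forall>j<i. \<not> f (x k + (\<theta> ^ j * \<alpha>) *\<^sub>R (z k - x k)) \<le> f (x k) + \<eta> * (\<theta> ^ j * \<alpha>) * inner (grad (x k)) (z k - x k)"
        using Hk[of k] by blast
      show ?thesis
      proof (cases i)
        case 0 then show ?thesis using i by (simp add: cmin_def)
      next
        case (Suc j)
        define t where "t = \<theta> ^ j * \<alpha>"
        have t01: "0 < t" "t \<le> 1" using pow[of j] unfolding t_def by auto
        have nat: "\<not> f (x k + t *\<^sub>R (z k - x k)) \<le> f (x k) + \<eta> * t * inner (grad (x k)) (z k - x k)"
          using na Suc unfolding t_def by auto
        have wO: "x k + t *\<^sub>R (z k - x k) \<in> \<Omega>" using segO[OF xO zO] t01 by auto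
        have "f (x k + t *\<^sub>R (z k - x k)) \<le> f (x k) + inner (grad (x k)) ((x k + t *\<^sub>R (z k - x k)) - x k)
            + L / 2 * (norm ((x k + t *\<^sub>R (z k - x k)) - x k))\<^sup>2"
          by (rule descent[OF cvx deriv lip xO wO])
        also have "\<dots> = f (x k) + t * inner (grad (x k)) (z k - x k) + L / 2 * (t\<^sup>2 * (norm (z k - x k))\<^sup>2)"
          using t01 by (simp add: power_mult_distrib)
        finally have fw: "f (x k + t *\<^sub>R (z k - x k)) \<le> \<dots>" .
        have "t > (1 - \<eta>) / (\<beta> * L)"
          by (rule case2_a[OF fw nat DG Dnn[OF xO] \<open>\<beta> > 0\<close> \<open>L > 0\<close> _ \<open>0 < t\<close> \<open>\<eta> < 1\<close>]) simp
        then have "\<theta> * t \<ge> \<theta> * ((1 - \<eta>) / (\<beta> * L))" using \<open>0 < \<theta>\<close>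
          by (intro mult_left_mono) auto
        then have "\<theta> * t \<ge> \<theta> * (1 - \<eta>) / (\<beta> * L)" by simp
        moreover have "a k = \<theta> * t" using i Suc unfolding t_def by simp
        ultimately show ?thesis unfolding cmin_def by simp
      qed
    qed
    have "f (x (Suc k)) \<le> f (x k) - (\<eta> * cmin / \<beta>) * D k" for k
    proof -
      define G where "G = inner (grad (x k)) (z k - x k)"
      have f1: "f (x (Suc k)) \<le> f (x k) + \<eta> * a k * G" using Hk[of k] unfolding G_def by auto
      have "\<beta> * G \<le> - D k" using DG[of k] unfolding G_def by simp
      then have "G \<le> - D k / \<beta>" using \<open>\<beta> > 0\<close> by (simp add: field_simps)
      then have "\<eta> * a k * G \<le> \<eta> * a k * (- D k / \<beta>)"
        using \<open>0 < \<eta>\<close> ak[of k] by (intro mult_left_mono) auto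
      moreover have "\<eta> * cmin * (D k / \<beta>) \<le> \<eta> * a k * (D k / \<beta>)"
        using \<open>0 < \<eta>\<close> alow[of k] Dnn[OF xO] \<open>\<beta> > 0\<close> by (intro mult_right_mono mult_left_mono) auto
      ultimately show ?thesis using f1 by simp
    qed
    then show ?thesis using xO cpos \<open>0 < \<eta>\<close> \<open>\<beta> > 0\<close> by (intro exI[of _ "\<eta> * cmin / \<beta>"]) auto
  qed
  then obtain c where c: "c > 0" and xO: "\<And>k. x k \<in> \<Omega>" and dec: "\<And>k. f (x (Suc k)) \<le> f (x k) - c * D k"
    by blast
  have sumb: "c * (\<Sum>i<n. D i) \<le> f (x 0) - f (x n)" for n
  proof (induction n)
    case 0 then show ?case by simp
  next
    case (Suc n) then show ?case using dec[of n] by (simp add: algebra_simps)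
  qed
  have "(\<Sum>i<n. D i) \<le> (f (x 0) - flow) / c" for n
  proof -
    have "c * (\<Sum>i<n. D i) \<le> f (x 0) - flow" using sumb[of n] lower[OF xO[of n]] by linarith
    then show ?thesis using c by (simp add: field_simps)
  qed
  then have "summable D" using Dnn[OF xO] by (intro summableI_nonneg_bounded) auto
  then have D0: "D \<longlonglongrightarrow> 0" by (rule summable_LIMSEQ_zero)
  have w0: "\<omega> \<longlonglongrightarrow> 0" using \<open>summable \<omega>\<close> by (rule summable_LIMSEQ_zero)
  have "(\<lambda>k. 2 / \<gamma> * (D k + \<omega> k)) \<longlonglongrightarrow> 2 / \<gamma> * (0 + 0)"
    by (intro tendsto_intros D0 w0)
  then have up: "(\<lambda>k. 2 / \<gamma> * (D k + \<omega> k)) \<longlonglongrightarrow> 0" by simp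
  have Eb: "Emeas \<Omega> grad \<beta> (x k) \<le> 2 / \<gamma> * (D k + \<omega> k)" for k
  proof -
    have "\<gamma> / 2 * Emeas \<Omega> grad \<beta> (x k) \<le> D k + \<omega> k"
      using key(3)[OF cl cvx ne xO \<open>0 < \<gamma>\<close> omega_nonneg inexact[of k]]
      unfolding D_def v_def Emeas_def .
    then show ?thesis using \<open>0 < \<gamma>\<close> by (simp add: field_simps)
  qed
  show ?thesis
    by (rule tendsto_sandwich[of "\<lambda>_. 0" _ _ "\<lambda>k. 2 / \<gamma> * (D k + \<omega> k)"])
       (use Eb up in \<open>auto simp: Emeas_def\<close>)
qed

end
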